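(* Let $(S_n)_{n\ge0}$ be defined by $S_0=3$, $S_1=1$, $S_2=3$ and $S_{n+1}=S_n+S_{n-1}+S_{n-2}$ for $n\ge 2$. Let $\alpha,\beta,\gamma$ be the roots of $x^3-x^2-x-1=0$ and $C_n=\alpha^n\beta^n+\alpha^n\gamma^n+\beta^n\gamma^n$ for $n\ge0$. Then for all integers $n\ge 0$ and $m\ge 2$, $$S_nS_{nm}=S_{n(m+1)}+S_{n(m-1)}C_n-S_{n(m-2)}.$$
   Context: $S_n$ is the generalized Lucas (generalized Tribonacci) sequence. *)

theory Defs
  imports Complex_Main
begin

fun S :: "nat \<Rightarrow> int" where
  "S 0 = 3"
| "S (Suc 0) = 1"
| "S (Suc (Suc 0)) = 3"
| "S (Suc (Suc (Suc n))) = S (Suc (Suc n)) + S (Suc n) + S n"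

end

theory Submission
  imports Defs
begin

lemma S_pow:
  fixes \<alpha> \<beta> \<gamma> :: complex
  assumes ra: "\<alpha>^3 = \<alpha>^2 + \<alpha> + 1" and rb: "\<beta>^3 = \<beta>^2 + \<beta> + 1"
    and rc: "\<gamma>^3 = \<gamma>^2 + \<gamma> + 1"
    and e1: "\<alpha> + \<beta> + \<gamma> = 1" and e2: "\<alpha>*\<beta> + \<alpha>*\<gamma> + \<beta>*\<gamma> = -1"
  shows "of_int (S k) = \<alpha>^k + \<beta>^k + \<gamma>^k"
proof (induction k rule: S.induct)
  case 1 then show ?case by simp
next
  case 2 then show ?case using e1 by simp
next
  case 3
  have "\<alpha>^2+\<beta>^2+\<gamma>^2 = (\<alpha> + \<beta> + \<gamma>)^2 - 2*(\<alpha>*\<beta> + \<alpha>*\<gamma> + \<beta>*\<gamma>)"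
    by (simp add: power2_eq_square algebra_simps)
  also have "\<dots> = 3" using e1 e2 by simp
  finally have sq: "\<alpha>^2+\<beta>^2+\<gamma>^2 = 3" .
  have "S (Suc (Suc 0)) = 3" by simp
  then show ?case using sq by (simp add: numeral_2_eq_2)
next
  case (4 n)
  have a: "\<alpha>^(Suc (Suc (Suc n))) = \<alpha>^(Suc (Suc n)) + \<alpha>^(Suc n) + \<alpha>^n"
  proof -
    have "\<alpha>^(Suc (Suc (Suc n))) = \<alpha>^n * \<alpha>^3" by (simp add: power3_eq_cube algebra_simps)
    also have "\<dots> = \<alpha>^n * (\<alpha>^2 + \<alpha> + 1)" using ra by simp
    finally show ?thesis by (simp add: algebra_simps power2_eq_square)
  qed
  have b: "\<beta>^(Suc (Suc (Suc n))) = \<beta>^(Suc (Suc n)) + \<beta>^(Suc n) + \<beta>^n"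
  proof -
    have "\<beta>^(Suc (Suc (Suc n))) = \<beta>^n * \<beta>^3" by (simp add: power3_eq_cube algebra_simps)
    also have "\<dots> = \<beta>^n * (\<beta>^2 + \<beta> + 1)" using rb by simp
    finally show ?thesis by (simp add: algebra_simps power2_eq_square)
  qed
  have c: "\<gamma>^(Suc (Suc (Suc n))) = \<gamma>^(Suc (Suc n)) + \<gamma>^(Suc n) + \<gamma>^n"
  proof -
    have "\<gamma>^(Suc (Suc (Suc n))) = \<gamma>^n * \<gamma>^3" by (simp add: power3_eq_cube algebra_simps)
    also have "\<dots> = \<gamma>^n * (\<gamma>^2 + \<gamma> + 1)" using rc by simp
    finally show ?thesis by (simp add: algebra_simps power2_eq_square)
  qed
  show ?case using 4 a b c
    by (simp only: S.simps of_int_add) (simp add: algebra_simps)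
qed

theorem mainTheorem6:
  fixes \<alpha> \<beta> \<gamma> :: complex and n m :: nat
  assumes roots: "\<And>x::complex. x^3 - x^2 - x - 1 = (x - \<alpha>) * (x - \<beta>) * (x - \<gamma>)"
    and m2: "m \<ge> 2"
  shows "of_int (S n) * of_int (S (n * m)) =
           of_int (S (n * (m + 1)))
         + of_int (S (n * (m - 1))) * (\<alpha>^n * \<beta>^n + \<alpha>^n * \<gamma>^n + \<beta>^n * \<gamma>^n)
         - of_int (S (n * (m - 2)))"
proof -
  have r: "x^3 = x^2 + x + 1" if "x \<in> {\<alpha>,\<beta>,\<gamma>}" for x
    using roots[of x] that by (auto simp: algebra_simps)
  have z: "\<alpha>*\<beta>*\<gamma> = 1" using roots[of 0] by simp
  have o1: "-2 = 1 - (\<alpha>+\<beta>+\<gamma>) + (\<alpha>*\<beta> + \<alpha>*\<gamma> + \<beta>*\<gamma>) - \<alpha>*\<beta>*\<gamma>"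
    using roots[of 1] by (simp add: algebra_simps)
  have o2: "-2 = -(1 + (\<alpha>+\<beta>+\<gamma>) + (\<alpha>*\<beta> + \<alpha>*\<gamma> + \<beta>*\<gamma>) + \<alpha>*\<beta>*\<gamma>)"
    using roots[of "-1"] by (simp add: algebra_simps)
  define p where "p = \<alpha>+\<beta>+\<gamma>"
  define q where "q = \<alpha>*\<beta> + \<alpha>*\<gamma> + \<beta>*\<gamma>"
  have q1: "q = p - 2" using o1 z unfolding p_def[symmetric] q_def[symmetric]
    by (simp add: algebra_simps)
  have "p + q = 0" using o2 z unfolding p_def[symmetric] q_def[symmetric]
    by (simp add: algebra_simps)
  then have "2*p = 2" using q1 by (simp add: algebra_simps)
  then have "p = 1" by simp
  then have e1: "\<alpha>+\<beta>+\<gamma> = 1" unfolding p_def by simp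
  have e2: "\<alpha>*\<beta> + \<alpha>*\<gamma> + \<beta>*\<gamma> = -1" using q1 e1 unfolding q_def p_def by simp
  note SP = S_pow[OF r r r e1 e2, simplified]
  obtain k where k: "m = k + 2" using m2 by (metis add.commute le_Suc_ex)
  define a where "a = \<alpha>^n"
  define b where "b = \<beta>^n"
  define c where "c = \<gamma>^n"
  have abc: "a*b*c = 1" unfolding a_def b_def c_def using z
    by (metis power_mult_distrib power_one)
  have eq: "(a+b+c)*(a^(k+2)+b^(k+2)+c^(k+2)) = (a^(k+3)+b^(k+3)+c^(k+3))
     + (a^(k+1)+b^(k+1)+c^(k+1))*(a*b+a*c+b*c) - (a^k+b^k+c^k)*(a*b*c)"
    by (simp add: algebra_simps power_add power2_eq_square power3_eq_cube)
  have pw: "\<And>x::complex. x^(n*j) = (x^n)^j" for j by (simp add: power_mult)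
  have T: "of_int (S (n*j)) = a^j+b^j+c^j" for j
    unfolding SP a_def b_def c_def by (simp add: power_mult)
  have n1: "n*(m+1) = n*(k+3)" "n*(m-1) = n*(k+1)" "n*(m-2) = n*k" "n*m = n*(k+2)"
  proof -
    have h: "m+1 = k+3" "m-1=k+1" "m-2=k" "m=k+2" using k by simp_all
    show "n*(m+1) = n*(k+3)" "n*(m-1) = n*(k+1)" "n*(m-2) = n*k" "n*m = n*(k+2)"
      by (rule arg_cong[OF h(1)], rule arg_cong[OF h(2)], rule arg_cong[OF h(3)], rule arg_cong[OF h(4)])
  qed
  have n0: "n = n*1" by simp
  show ?thesis
    apply (subst (1) n0)
    unfolding n1 T
    using eq abc unfolding a_def b_def c_def by simp
qed

end
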